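(* If $L \subseteq a^*$ is a regular language over a one-letter alphabet, then $\mathbb{OGI}^*(L)$ is regular.
   Context: Outfix-guided insertion: $x \leftarrow y = \{ x_1 u z v x_2 \mid x = x_1 u v x_2,\ y = u z v,\ u \neq \varepsilon,\ v \neq \varepsilon \}$, extended to languages by union over all pairs. $\mathbb{OGI}^{(0)}(L) = L$, $\mathbb{OGI}^{(i+1)}(L) = \mathbb{OGI}^{(i)}(L) \leftarrow \mathbb{OGI}^{(i)}(L)$, and $\mathbb{OGI}^*(L) = \bigcup_{i \geq 0} \mathbb{OGI}^{(i)}(L)$. *)

theory Defs
  imports Main
begin

datatype 'a rexp = Zero | One | Atom 'a | Plus "'a rexp" "'a rexp"
  | Times "'a rexp" "'a rexp" | Star "'a rexp"

definition conc :: "'a list set \<Rightarrow> 'a list set \<Rightarrow> 'a list set" where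
  "conc A B = {u @ v | u v. u \<in> A \<and> v \<in> B}"

definition kstar :: "'a list set \<Rightarrow> 'a list set" where
  "kstar A = {concat ws | ws. set ws \<subseteq> A}"

fun lang :: "'a rexp \<Rightarrow> 'a list set" where
  "lang Zero = {}"
| "lang One = {[]}"
| "lang (Atom c) = {[c]}"
| "lang (Plus r s) = lang r \<union> lang s"
| "lang (Times r s) = conc (lang r) (lang s)"
| "lang (Star r) = kstar (lang r)"

definition regular :: "'a list set \<Rightarrow> bool" where
  "regular L \<longleftrightarrow> (\<exists>r. lang r = L)"

definition ogi_word :: "'a list \<Rightarrow> 'a list \<Rightarrow> 'a list set" where
  "ogi_word x y = {x1 @ u @ z @ v @ x2 | x1 u z v x2.
      x = x1 @ u @ v @ x2 \<and> y = u @ z @ v \<and> u \<noteq> [] \<and> v \<noteq> []}"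

definition ogi :: "'a list set \<Rightarrow> 'a list set \<Rightarrow> 'a list set" where
  "ogi L1 L2 = (\<Union>x\<in>L1. \<Union>y\<in>L2. ogi_word x y)"

fun ogi_iter :: "nat \<Rightarrow> 'a list set \<Rightarrow> 'a list set" where
  "ogi_iter 0 L = L"
| "ogi_iter (Suc i) L = ogi (ogi_iter i L) (ogi_iter i L)"

definition ogi_star :: "'a list set \<Rightarrow> 'a list set" where
  "ogi_star L = (\<Union>i. ogi_iter i L)"

end

theory Submission
  imports Defs
begin

lemma lists_rep: "w \<in> lists {a} \<Longrightarrow> w = replicate (length w) a"
  by (metis empty_iff in_listsD insert_iff replicate_length_same)

lemma rep_split: "2 \<le> k \<Longrightarrow> k \<le> p \<Longrightarrow>
  replicate p a = [a] @ replicate (k-1) a @ replicate (p-k) a"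
proof -
  assume "2 \<le> k" "k \<le> p"
  hence "p = 1 + ((k-1) + (p-k))" by arith
  hence "replicate p a = replicate 1 a @ replicate (k-1) a @ replicate (p-k) a"
    by (metis replicate_add)
  thus ?thesis by simp
qed

lemma ogi_unary:
  assumes "A \<subseteq> lists {a}" "B \<subseteq> lists {a}"
  shows "w \<in> ogi A B \<longleftrightarrow> (\<exists>p q k. replicate p a \<in> A \<and> replicate q a \<in> B \<and> 2 \<le> k \<and> k \<le> p \<and> k \<le> q \<and> w = replicate (p+q-k) a)"
proof
  assume "w \<in> ogi A B"
  then obtain x y where xy: "x \<in> A" "y \<in> B" "w \<in> ogi_word x y" unfolding ogi_def by blast
  then obtain x1 u z v x2 where d: "w = x1 @ u @ z @ v @ x2" "x = x1 @ u @ v @ x2" "y = u @ z @ v" "u \<noteq> []" "v \<noteq> []"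
    unfolding ogi_word_def by blast
  have xl: "x \<in> lists {a}" "y \<in> lists {a}" using xy assms by auto
  hence "w \<in> lists {a}" using d by auto
  hence w: "w = replicate (length w) a" by (rule lists_rep)
  have lu: "length u \<ge> 1" "length v \<ge> 1" using d by (auto simp: Suc_le_eq)
  show "\<exists>p q k. replicate p a \<in> A \<and> replicate q a \<in> B \<and> 2 \<le> k \<and> k \<le> p \<and> k \<le> q \<and> w = replicate (p+q-k) a"
  proof (intro exI conjI)
    show "replicate (length x) a \<in> A" using lists_rep[OF xl(1)] xy by simp
    show "replicate (length y) a \<in> B" using lists_rep[OF xl(2)] xy by simp
    show "2 \<le> length u + length v" using lu by simp
    show "length u + length v \<le> length x" using d by simp
    show "length u + length v \<le> length y" using d by simp
    have "length w = length x + length y - (length u + length v)" using d by simp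
    thus "w = replicate (length x + length y - (length u + length v)) a" using w by simp
  qed
next
  assume "\<exists>p q k. replicate p a \<in> A \<and> replicate q a \<in> B \<and> 2 \<le> k \<and> k \<le> p \<and> k \<le> q \<and> w = replicate (p+q-k) a"
  then obtain p q k where h: "replicate p a \<in> A" "replicate q a \<in> B" "2 \<le> k" "k \<le> p" "k \<le> q" "w = replicate (p+q-k) a"
    by blast
  have x: "replicate p a = [] @ [a] @ replicate (k-1) a @ replicate (p-k) a" using rep_split[OF h(3,4)] by simp
  have y: "replicate q a = [a] @ replicate (q-k) a @ replicate (k-1) a"
    using rep_split[OF h(3,5)] by (simp add: replicate_app_Cons_same[symmetric] replicate_add[symmetric] add.commute)
  have "p + q - k = 1 + (q-k) + (k-1) + (p-k)" using h by arith
  hence "w = replicate (1 + (q-k) + (k-1) + (p-k)) a" using h(6) by (simp only:)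
  hence "w = [] @ [a] @ replicate (q-k) a @ replicate (k-1) a @ replicate (p-k) a"
    by (simp only: replicate_add) simp
  note ww = this
  have "w \<in> ogi_word (replicate p a) (replicate q a)"
    unfolding ogi_word_def
    apply (rule CollectI, rule exI[of _ "[]"], rule exI[of _ "[a]"], rule exI[of _ "replicate (q-k) a"],
           rule exI[of _ "replicate (k-1) a"], rule exI[of _ "replicate (p-k) a"])
    apply (intro conjI)
        apply (rule ww)
       apply (rule x)
      apply (rule y)
    using h(3) by simp_all
  thus "w \<in> ogi A B" unfolding ogi_def using h by blast
qed

lemma ogi_lists: "A \<subseteq> lists {a} \<Longrightarrow> ogi A A \<subseteq> lists {a}"
  using ogi_unary[of A a A] by auto

lemma iter_lists: "L \<subseteq> lists {a} \<Longrightarrow> ogi_iter i L \<subseteq> lists {a}"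
  by (induction i) (simp_all add: ogi_lists)

fun repr :: "nat \<Rightarrow> 'a \<Rightarrow> 'a rexp" where
  "repr 0 a = One"
| "repr (Suc n) a = Times (Atom a) (repr n a)"

lemma lang_repr: "lang (repr n a) = {replicate n a}"
  by (induction n) (auto simp: conc_def)

lemma concat_rep: "set ws \<subseteq> {[a]} \<Longrightarrow> concat ws = replicate (length ws) a"
  by (induction ws) auto

lemma concat_rep2: "concat (replicate n [a]) = replicate n a"
  by (induction n) auto

lemma lang_star_atom: "lang (Star (Atom a)) = range (\<lambda>n. replicate n a)"
proof
  show "lang (Star (Atom a)) \<subseteq> range (\<lambda>n. replicate n a)"
    by (auto simp: kstar_def dest!: concat_rep)
  show "range (\<lambda>n. replicate n a) \<subseteq> lang (Star (Atom a))"
  proof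
    fix w assume "w \<in> range (\<lambda>n. replicate n a)"
    then obtain n where "w = replicate n a" by blast
    hence "w = concat (replicate n [a])" by (simp add: concat_rep2)
    moreover have "set (replicate n [a]) \<subseteq> {[a]}" by auto
    ultimately show "w \<in> lang (Star (Atom a))" unfolding kstar_def lang.simps by blast
  qed
qed

lemma regular_ge: "regular {replicate n a | n. m \<le> n}"
proof -
  have "lang (Times (repr m a) (Star (Atom a))) = {replicate n a | n. m \<le> n}"
  proof (rule set_eqI)
    fix w
    show "w \<in> lang (Times (repr m a) (Star (Atom a))) \<longleftrightarrow> w \<in> {replicate n a | n. m \<le> n}"
    proof
      assume "w \<in> lang (Times (repr m a) (Star (Atom a)))"
      then obtain n where "w = replicate m a @ replicate n a"
        unfolding lang.simps(5) lang_repr lang_star_atom conc_def by blast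
      hence "w = replicate (m+n) a" by (simp add: replicate_add)
      thus "w \<in> {replicate n a | n. m \<le> n}" by auto
    next
      assume "w \<in> {replicate n a | n. m \<le> n}"
      then obtain n where n: "w = replicate n a" "m \<le> n" by blast
      hence "w = replicate m a @ replicate (n-m) a" by (metis le_add_diff_inverse replicate_add)
      thus "w \<in> lang (Times (repr m a) (Star (Atom a)))"
        unfolding lang.simps(5) lang_repr lang_star_atom conc_def by blast
    qed
  qed
  thus ?thesis unfolding regular_def by blast
qed

lemma regular_Un: "regular A \<Longrightarrow> regular B \<Longrightarrow> regular (A \<union> B)"
  unfolding regular_def by (metis lang.simps(4))

theorem theorem4p11:
  fixes L :: "'a list set" and a :: 'a
  assumes "L \<subseteq> lists {a}" and "regular L"
  shows "regular (ogi_star L)"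
proof -
  have IL: "\<And>i. ogi_iter i L \<subseteq> lists {a}" by (rule iter_lists[OF assms(1)])
  have mem: "\<And>i w. w \<in> ogi_iter (Suc i) L \<longleftrightarrow> (\<exists>p q k. replicate p a \<in> ogi_iter i L \<and> replicate q a \<in> ogi_iter i L \<and> 2 \<le> k \<and> k \<le> p \<and> k \<le> q \<and> w = replicate (p+q-k) a)"
    by (simp only: ogi_iter.simps(2) ogi_unary[OF IL IL])
  define P where "P = {n. 3 \<le> n \<and> replicate n a \<in> L}"
  show ?thesis
  proof (cases "P = {}")
    case True
    have "ogi_iter i L \<subseteq> L" for i
    proof (induction i)
      case 0 thus ?case by simp
    next
      case (Suc i)
      show ?case
      proof
        fix w assume "w \<in> ogi_iter (Suc i) L"
        from mem[THEN iffD1, OF this] obtain p q k where h: "replicate p a \<in> ogi_iter i L" "replicate q a \<in> ogi_iter i L" "2 \<le> k" "k \<le> p" "k \<le> q" "w = replicate (p+q-k) a"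
          by blast
        have "p \<notin> P" "q \<notin> P" using True by auto
        have pL: "replicate p a \<in> L" "replicate q a \<in> L" using h(1,2) Suc.IH by blast+
        have "\<not> 3 \<le> p" "\<not> 3 \<le> q" using \<open>p \<notin> P\<close> \<open>q \<notin> P\<close> pL unfolding P_def by blast+
        hence "p = 2" "q = 2" using h(3,4,5) by linarith+
        hence "w = replicate p a" using h(3,4,5,6) by simp
        thus "w \<in> L" using pL by simp
      qed
    qed
    hence "ogi_star L \<subseteq> L" unfolding ogi_star_def by blast
    moreover have "L \<subseteq> ogi_star L" unfolding ogi_star_def by (metis UNIV_I UN_upper ogi_iter.simps(1))
    ultimately have "ogi_star L = L" by (rule antisym)
    thus ?thesis using assms(2) by simp
  next
    case False
    define m where "m = (LEAST n. n \<in> P)"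
    obtain n0 where "n0 \<in> P" using False by blast
    hence mP: "m \<in> P" unfolding m_def by (rule LeastI)
    have mle: "\<And>n. n \<in> P \<Longrightarrow> m \<le> n" unfolding m_def by (rule Least_le)
    define U where "U = {replicate n a | n. m \<le> n}"
    have sub: "ogi_iter i L \<subseteq> L \<union> U" for i
    proof (induction i)
      case 0 thus ?case by simp
    next
      case (Suc i)
      show ?case
      proof
        fix w assume "w \<in> ogi_iter (Suc i) L"
        from mem[THEN iffD1, OF this] obtain p q k where h: "replicate p a \<in> ogi_iter i L" "replicate q a \<in> ogi_iter i L" "2 \<le> k" "k \<le> p" "k \<le> q" "w = replicate (p+q-k) a"
          by blast
        show "w \<in> L \<union> U"
        proof (cases "m \<le> p \<or> m \<le> q")
          case True
          hence "m \<le> p + q - k" using h by arith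
          thus ?thesis using h(6) unfolding U_def by blast
        next
          case F: False
          have pL: "replicate p a \<in> L" using h(1) Suc.IH F unfolding U_def by auto
          have qL: "replicate q a \<in> L" using h(2) Suc.IH F unfolding U_def by auto
          have "p \<notin> P" "q \<notin> P" using F mle by blast+
          hence "\<not> 3 \<le> p" "\<not> 3 \<le> q" using pL qL unfolding P_def by blast+
          hence "p = 2" "q = 2" using h(3,4,5) by linarith+
          hence "w = replicate p a" using h(3,4,5,6) by simp
          thus ?thesis using pL by simp
        qed
      qed
    qed
    have m3: "3 \<le> m" "replicate m a \<in> L" using mP unfolding P_def by auto
    have grow: "replicate (m + j) a \<in> ogi_iter (Suc j) L" for j
    proof (induction j)
      case 0
      show ?case unfolding mem
        by (rule exI[of _ m], rule exI[of _ m], rule exI[of _ m]) (use m3 in simp)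
    next
      case (Suc j)
      have "m + j + (m + j) - (m + j - 1) = m + Suc j" using m3 by simp
      thus ?case
        apply (intro mem[THEN iffD2])
        apply (rule exI[of _ "m+j"], rule exI[of _ "m+j"], rule exI[of _ "m+j-1"])
        using m3 Suc.IH by simp
    qed
    have "ogi_star L = L \<union> U"
    proof
      show "ogi_star L \<subseteq> L \<union> U" unfolding ogi_star_def using sub by blast
      show "L \<union> U \<subseteq> ogi_star L"
      proof
        fix w assume "w \<in> L \<union> U"
        thus "w \<in> ogi_star L"
        proof
          assume "w \<in> L" thus ?thesis unfolding ogi_star_def
            by (metis UNIV_I UN_iff ogi_iter.simps(1))
        next
          assume "w \<in> U"
          then obtain n where "w = replicate n a" "m \<le> n" unfolding U_def by blast
          hence "w = replicate (m + (n - m)) a" by simp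
          thus ?thesis using grow[of "n-m"] unfolding ogi_star_def by blast
        qed
      qed
    qed
    thus ?thesis using regular_Un[OF assms(2) regular_ge[of a m]] by (simp add: U_def)
  qed
qed

end
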